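(* For $W>0$ let $X_W\sim\operatorname{IG}(W^{-1},1)$, let $\gamma=-\int_0^\infty e^{-t}\log t\,dt$ be the Euler–Mascheroni constant and $c_2:=\gamma+\log2$. Then $$E[\log X_W]=-\log W-\int_0^\infty\frac{e^{-u}}{u+2W}\,du=e^{2W}\int_0^{2W}(\log t+\gamma)e^{-t}\,dt+c_2.$$ Moreover, $-\log(W+\frac12)\le E[\log X_W]\le\min\{-\log W,c_2\}$ for all $W>0$; $c_2+4W(\log W+c_2-1)\le E[\log X_W]\le c_2$ for $0<W\le\frac12e^{-\gamma}$; and $\lim_{W\to0}E[\log X_W]=c_2$.
   Context: $\operatorname{IG}(\mu,\lambda)$, $\mu,\lambda>0$, denotes the inverse Gaussian distribution with density $f(x)=\sqrt{\frac{\lambda}{2\pi x^3}}\exp\big(-\frac{\lambda(x-\mu)^2}{2\mu^2x}\big)$, $x>0$. *)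

theory Defs
  imports "HOL-Analysis.Analysis"
begin

definition IG_density :: "real \<Rightarrow> real \<Rightarrow> real \<Rightarrow> real" where
  "IG_density m lam x =
     sqrt (lam / (2 * pi * x ^ 3)) * exp (- (lam * (x - m)\<^sup>2) / (2 * m\<^sup>2 * x))"

definition E_log_IG :: "real \<Rightarrow> real" where
  "E_log_IG W = (LINT x:{0<..}|lborel. ln x * IG_density (1 / W) 1 x)"

end

theory Submission
  imports Defs "HOL-Probability.Distributions" "HOL-Real_Asymp.Real_Asymp"
begin

definition rr :: "real \<Rightarrow> real" where "rr s = sqrt (1 + s\<^sup>2)"
definition LL :: "real \<Rightarrow> real" where "LL s = ln (s + rr s)"
definition XX :: "real \<Rightarrow> real \<Rightarrow> real" where "XX W s = (s + rr s)\<^sup>2 / W"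
definition XX' :: "real \<Rightarrow> real \<Rightarrow> real" where "XX' W s = 2 * (s + rr s)\<^sup>2 / (W * rr s)"

lemma rr_pos: "rr s > 0" and rr_ge1: "rr s \<ge> 1" and rr_sq: "(rr s)\<^sup>2 = 1 + s\<^sup>2"
  by (auto simp: rr_def add_pos_nonneg)

lemma rr_gt_abs: "rr s > \<bar>s\<bar>"
  unfolding rr_def by (rule real_less_rsqrt) (simp add: power2_eq_square)

lemma rr_minus[simp]: "rr (-s) = rr s" by (simp add: rr_def)

lemma p_pos: "s + rr s > 0" and q_pos: "rr s - s > 0"
  using rr_gt_abs[of s] by auto

lemma pq_prod: "(s + rr s) * (rr s - s) = 1"
proof -
  have "(s + rr s) * (rr s - s) = (rr s)\<^sup>2 - s\<^sup>2" by (simp add: power2_eq_square algebra_simps)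
  thus ?thesis by (simp add: rr_sq)
qed

lemma LL_minus: "LL (-s) = - LL s"
proof -
  have "rr s - s = inverse (s + rr s)" using pq_prod[of s] p_pos[of s]
    by (simp add: field_simps)
  thus ?thesis unfolding LL_def using p_pos[of s] by (simp add: ln_inverse)
qed

lemma LL_nonneg: "s \<ge> 0 \<Longrightarrow> LL s \<ge> 0"
  unfolding LL_def using rr_ge1[of s] by simp

lemma LL_le: "s \<ge> 0 \<Longrightarrow> LL s \<le> 2 * s"
proof -
  assume s: "s \<ge> 0"
  have "rr s \<le> 1 + s" unfolding rr_def
    by (rule real_le_lsqrt) (use s in \<open>auto simp add: power2_eq_square algebra_simps\<close>)
  hence "LL s \<le> ln (1 + 2 * s)" unfolding LL_def using p_pos[of s] by simp
  also have "\<dots> \<le> 2 * s" using ln_le_minus_one[of "1 + 2 * s"] s by simp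
  finally show ?thesis .
qed

lemma LL_abs: "\<bar>LL s\<bar> \<le> 2 * \<bar>s\<bar>"
proof (cases "s \<ge> 0")
  case True thus ?thesis using LL_nonneg LL_le by simp
next
  case False
  have "LL (-s) \<ge> 0" "LL (-s) \<le> 2 * (-s)" using LL_nonneg[of "-s"] LL_le[of "-s"] False by auto
  thus ?thesis using False LL_minus[of s] by linarith
qed

lemma sLL_nonneg: "0 \<le> s * LL s"
proof (cases "s \<ge> 0")
  case True thus ?thesis using LL_nonneg by simp
next
  case False
  hence "LL (-s) \<ge> 0" using LL_nonneg by auto
  thus ?thesis using False LL_minus[of s] by (simp add: mult_nonpos_nonpos)
qed

lemma DERIV_rr: "(rr has_real_derivative (s / rr s)) (at s)"
proof -
  have "((\<lambda>s. sqrt (1 + s\<^sup>2)) has_real_derivative (s / sqrt (1 + s\<^sup>2))) (at s)"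
    by (auto intro!: derivative_eq_intros simp: add_pos_nonneg field_simps) (smt (verit) zero_le_power2)+
  thus ?thesis unfolding rr_def[abs_def] by simp
qed

lemma DERIV_LL: "(LL has_real_derivative (1 / rr s)) (at s)"
proof -
  have "((\<lambda>s. s + rr s) has_real_derivative (1 + s / rr s)) (at s)"
    by (rule DERIV_add[OF DERIV_ident DERIV_rr])
  hence "((\<lambda>s. ln (s + rr s)) has_real_derivative (inverse (s + rr s) * (1 + s / rr s))) (at s)"
    by (rule DERIV_chain2[where f=ln and g="\<lambda>s. s + rr s", OF DERIV_ln[OF p_pos[of s]]])
  moreover have "inverse (s + rr s) * (1 + s / rr s) = 1 / rr s"
    using p_pos[of s] rr_pos[of s] by (simp add: field_simps)
  ultimately show ?thesis unfolding LL_def[abs_def] by simp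
qed

lemma DERIV_XX: assumes "W > 0" shows "(XX W has_real_derivative XX' W s) (at s)"
proof -
  have "((\<lambda>s. s + rr s) has_real_derivative (1 + s / rr s)) (at s)"
    by (rule DERIV_add[OF DERIV_ident DERIV_rr])
  note DERIV_cdivide[OF DERIV_power[OF this, of 2], of W]
  moreover have "real 2 * ((1 + s / rr s) * (s + rr s) ^ (2 - Suc 0)) / W = XX' W s"
    using p_pos[of s] rr_pos[of s] assms unfolding XX'_def by (simp add: field_simps power2_eq_square)
  ultimately show ?thesis unfolding XX_def[abs_def] by (rule DERIV_cong)
qed

lemma XX_pos: "W > 0 \<Longrightarrow> XX W s > 0"
  unfolding XX_def using p_pos[of s] by simp

lemma XX'_pos: "W > 0 \<Longrightarrow> XX' W s > 0"
  unfolding XX'_def using p_pos[of s] rr_pos[of s] by simp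

lemma ln_XX: "W > 0 \<Longrightarrow> ln (XX W s) = 2 * LL s - ln W"
  unfolding XX_def LL_def using p_pos[of s] by (simp add: ln_div ln_realpow)

lemma IG_subst:
  assumes W: "W > 0"
  shows "XX' W s * IG_density (1/W) 1 (XX W s) = normal_density 0 (1/(2 * sqrt W)) s * (1 - s / rr s)"
proof -
  define p where "p = s + rr s"
  have p: "p > 0" using p_pos[of s] by (simp add: p_def)
  have pr: "p * (rr s - s) = 1" using pq_prod[of s] by (simp add: p_def)
  have Z1: "p\<^sup>2 - 1 = 2 * s * p"
    using rr_sq[of s] by (simp add: p_def power2_eq_square algebra_simps)
  have XXp: "XX W s = p\<^sup>2 / W" by (simp add: XX_def p_def)
  have ex: "(1 * (XX W s - 1 / W)\<^sup>2) / (2 * (1 / W)\<^sup>2 * XX W s) = 2 * W * s\<^sup>2"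
  proof -
    have "XX W s - 1 / W = (p\<^sup>2 - 1) / W" using W by (simp add: XXp field_simps)
    hence "(1 * (XX W s - 1 / W)\<^sup>2) / (2 * (1 / W)\<^sup>2 * XX W s) = (2 * s * p)\<^sup>2 / W\<^sup>2 / (2 / W\<^sup>2 * (p\<^sup>2 / W))"
      by (simp add: Z1 XXp power_divide)
    also have "\<dots> = 2 * W * s\<^sup>2" using W p by (simp add: field_simps power2_eq_square)
    finally show ?thesis .
  qed
  have sq: "sqrt (1 / (2 * pi * XX W s ^ 3)) = W * sqrt W / (p ^ 3 * sqrt (2 * pi))"
  proof (rule real_sqrt_unique)
    show "(W * sqrt W / (p ^ 3 * sqrt (2 * pi)))\<^sup>2 = 1 / (2 * pi * XX W s ^ 3)"
      using W p by (simp add: XXp power_mult_distrib power_divide field_simps power2_eq_square power3_eq_cube)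
    show "0 \<le> W * sqrt W / (p ^ 3 * sqrt (2 * pi))" using W p by simp
  qed
  have nd: "normal_density 0 (1/(2 * sqrt W)) s = sqrt 2 * sqrt W / sqrt pi * exp (- (2 * W * s\<^sup>2))"
  proof -
    have sW: "(1 / (2 * sqrt W))\<^sup>2 = 1 / (4 * W)" using W by (simp add: power_divide power_mult_distrib)
    have a: "2 * pi * (1 / (2 * sqrt W))\<^sup>2 = pi / (2 * W)" using W by (simp add: sW)
    have b: "- (s - 0)\<^sup>2 / (2 * (1 / (2 * sqrt W))\<^sup>2) = - (2 * W * s\<^sup>2)" using W by (simp add: sW)
    have c: "1 / sqrt (pi / (2 * W)) = sqrt 2 * sqrt W / sqrt pi"
      using W by (simp add: real_sqrt_divide real_sqrt_mult)
    show ?thesis unfolding normal_density_def a b c by simp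
  qed
  have "XX' W s * IG_density (1/W) 1 (XX W s) = 2 * p\<^sup>2 / (W * rr s) * (W * sqrt W / (p ^ 3 * sqrt (2 * pi))) * exp (- (2 * W * s\<^sup>2))"
    unfolding IG_density_def sq
    by (simp only: XX'_def p_def[symmetric] minus_divide_left[symmetric] ex)
  also have "\<dots> = sqrt 2 * sqrt W / sqrt pi * exp (- (2 * W * s\<^sup>2)) * (1 / (p * rr s))"
  proof -
    have "sqrt (2 * pi) = sqrt 2 * sqrt pi" by (simp add: real_sqrt_mult)
    moreover have "sqrt 2 * sqrt 2 = 2" by simp
    ultimately show ?thesis using W p rr_pos[of s]
      by (simp add: field_simps power2_eq_square power3_eq_cube)
  qed
  also have "1 / (p * rr s) = 1 - s / rr s"
  proof -
    have "rr s - s = 1 / p" using pr p by (simp add: field_simps)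
    hence "1 - s / rr s = (1 / p) / rr s" using rr_pos[of s] by (simp add: field_simps)
    thus ?thesis by simp
  qed
  finally show ?thesis by (simp add: nd)
qed

lemma rr_meas[measurable]: "rr \<in> borel_measurable borel"
  unfolding rr_def[abs_def] by measurable

lemma LL_meas[measurable]: "LL \<in> borel_measurable borel"
  unfolding LL_def[abs_def] by measurable

lemma IG_meas[measurable]: "(\<lambda>x. IG_density m l x) \<in> borel_measurable borel"
  unfolding IG_density_def by measurable

lemma isCont_h: "x > 0 \<Longrightarrow> m \<noteq> 0 \<Longrightarrow> isCont (\<lambda>x. ln x * IG_density m l x) x"
  unfolding IG_density_def by (intro continuous_intros) auto

lemma isCont_rr: "isCont rr s"
  by (rule DERIV_isCont[OF DERIV_rr])

lemma isCont_XX': "W > 0 \<Longrightarrow> isCont (XX' W) s"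
  unfolding XX'_def[abs_def] using rr_pos[of s]
  by (intro isCont_divide isCont_mult isCont_power isCont_add continuous_const continuous_ident isCont_rr) auto

lemma abs_one_minus: "\<bar>1 - s / rr s\<bar> \<le> 2"
proof -
  have "\<bar>s\<bar> / rr s \<le> 1" using rr_gt_abs[of s] rr_pos[of s] by simp
  hence "\<bar>s / rr s\<bar> \<le> 1" unfolding abs_divide abs_of_pos[OF rr_pos] .
  thus ?thesis by linarith
qed

definition sfun :: "real \<Rightarrow> real \<Rightarrow> real" where
  "sfun W s = normal_density 0 (1 / (2 * sqrt W)) s * (1 - s / rr s) * (2 * LL s - ln W)"

lemma sfun_eq: "W > 0 \<Longrightarrow> XX' W s * (ln (XX W s) * IG_density (1/W) 1 (XX W s)) = sfun W s"
proof -
  assume W: "W > 0"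
  have "XX' W s * (ln (XX W s) * IG_density (1/W) 1 (XX W s)) = ln (XX W s) * (XX' W s * IG_density (1/W) 1 (XX W s))"
    by (simp only: mult_ac)
  also have "\<dots> = (2 * LL s - ln W) * (normal_density 0 (1/(2 * sqrt W)) s * (1 - s / rr s))"
    by (simp only: IG_subst[OF W] ln_XX[OF W])
  finally show ?thesis unfolding sfun_def by (simp only: mult_ac)
qed

lemma sfun_integrable:
  assumes W: "W > 0"
  shows "integrable lborel (sfun W)"
proof (rule Bochner_Integration.integrable_bound)
  let ?nd = "normal_density 0 (1 / (2 * sqrt W))"
  have s: "0 < 1 / (2 * sqrt W)" using W by simp
  show "integrable lborel (\<lambda>s. 8 * (?nd s * \<bar>s - 0\<bar> ^ 1) + (2 * \<bar>ln W\<bar>) * ?nd s)"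
    using integrable_normal_moment_abs[OF s, of 0 1] integrable_normal_density[OF s, of 0]
    by (intro Bochner_Integration.integrable_add Bochner_Integration.integrable_mult_right) auto
  show "sfun W \<in> borel_measurable lborel" unfolding sfun_def by measurable
  show "AE x in lborel. norm (sfun W x) \<le> norm (8 * (?nd x * \<bar>x - 0\<bar> ^ 1) + (2 * \<bar>ln W\<bar>) * ?nd x)"
  proof (rule AE_I2)
    fix x
    have n: "0 \<le> ?nd x" by simp
    have "\<bar>sfun W x\<bar> = ?nd x * (\<bar>1 - x / rr x\<bar> * \<bar>2 * LL x - ln W\<bar>)"
      unfolding sfun_def by (simp add: abs_mult)
    also have "\<dots> \<le> ?nd x * (2 * (4 * \<bar>x\<bar> + \<bar>ln W\<bar>))"
    proof (intro mult_left_mono n mult_mono abs_one_minus)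
      show "\<bar>2 * LL x - ln W\<bar> \<le> 4 * \<bar>x\<bar> + \<bar>ln W\<bar>" using LL_abs[of x] by linarith
    qed auto
    also have "\<dots> = 8 * (?nd x * \<bar>x - 0\<bar> ^ 1) + (2 * \<bar>ln W\<bar>) * ?nd x"
      by (simp add: algebra_simps)
    finally show "norm (sfun W x) \<le> norm (8 * (?nd x * \<bar>x - 0\<bar> ^ 1) + (2 * \<bar>ln W\<bar>) * ?nd x)"
      by simp
  qed
qed

lemma XX_lim_bot: assumes W: "W > 0" shows "(XX W \<longlongrightarrow> 0) at_bot"
proof -
  have "filterlim (\<lambda>s::real. - s) at_top at_bot" by (rule filterlim_uminus_at_top_at_bot)
  hence "filterlim (\<lambda>s. rr s - s) at_top at_bot"
    by (rule filterlim_at_top_mono) (auto intro!: always_eventually simp: rr_pos less_imp_le)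
  hence "((\<lambda>s. inverse (rr s - s)) \<longlongrightarrow> 0) at_bot" by (rule tendsto_inverse_0_at_top)
  moreover have "inverse (rr s - s) = s + rr s" for s
    using pq_prod[of s] q_pos[of s] by (simp add: field_simps)
  ultimately have "((\<lambda>s. s + rr s) \<longlongrightarrow> 0) at_bot" by simp
  hence "((\<lambda>s. (s + rr s)\<^sup>2 / W) \<longlongrightarrow> 0\<^sup>2 / W) at_bot" using W by (intro tendsto_intros) auto
  thus ?thesis unfolding XX_def[abs_def] by simp
qed

lemma XX_lim_top: assumes W: "W > 0" shows "filterlim (XX W) at_top at_top"
proof -
  have "filterlim (\<lambda>s. (1 / W) * s) at_top at_top"
    by (rule filterlim_tendsto_pos_mult_at_top[OF tendsto_const _ filterlim_ident]) (use W in simp)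
  thus ?thesis
  proof (rule filterlim_at_top_mono)
    show "\<forall>\<^sub>F x in at_top. 1 / W * x \<le> XX W x"
      using eventually_ge_at_top[of "1::real"]
    proof eventually_elim
      case (elim x)
      have "x \<le> x + rr x" using rr_pos[of x] by simp
      also have "\<dots> \<le> (x + rr x) ^ 2" using elim rr_pos[of x]
        by (intro self_le_power) auto
      finally show ?case using W unfolding XX_def by (simp add: divide_right_mono field_simps)
    qed
  qed
qed

lemma subst_main:
  assumes W: "W > 0"
  shows "set_integrable lborel {0<..} (\<lambda>x. ln x * IG_density (1 / W) 1 x)"
    and "E_log_IG W = (\<integral>s. sfun W s \<partial>lborel)"
proof -
  let ?h = "\<lambda>x. ln x * IG_density (1 / W) 1 x"
  have lims: "((ereal \<circ> XX W \<circ> real_of_ereal) \<longlongrightarrow> ereal 0) (at_right (-\<infinity>))"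
             "((ereal \<circ> XX W \<circ> real_of_ereal) \<longlongrightarrow> \<infinity>) (at_left \<infinity>)"
    using XX_lim_bot[OF W] XX_lim_top[OF W]
    unfolding ereal_tendsto_simps1 ereal_tendsto_simps2 by simp_all
  have absint: "set_integrable lborel (einterval (-\<infinity>) \<infinity>) (\<lambda>s. \<bar>?h (XX W s)\<bar> * XX' W s)"
  proof -
    have "\<bar>?h (XX W s)\<bar> * XX' W s = \<bar>sfun W s\<bar>" for s
    proof -
      have "\<bar>sfun W s\<bar> = \<bar>XX' W s\<bar> * \<bar>?h (XX W s)\<bar>" unfolding sfun_eq[OF W, symmetric] abs_mult by simp
      thus ?thesis using XX'_pos[OF W, of s] by simp
    qed
    hence "(\<lambda>s. \<bar>?h (XX W s)\<bar> * XX' W s) = (\<lambda>s. \<bar>sfun W s\<bar>)" by auto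
    thus ?thesis using sfun_integrable[OF W] unfolding set_integrable_def by simp
  qed
  have "set_integrable lborel (einterval (ereal 0) \<infinity>) (\<lambda>x. \<bar>?h x\<bar>)"
    by (rule interval_integral_substitution_nonneg(1)[OF _ DERIV_XX[OF W] _ _ _ _ lims absint])
       (use W in \<open>auto intro!: isCont_rabs isCont_h XX_pos[OF W] isCont_XX'[OF W] less_imp_le[OF XX'_pos[OF W]]\<close>)
  hence absi: "set_integrable lborel {0<..} (\<lambda>x. \<bar>?h x\<bar>)" by simp
  show hint: "set_integrable lborel {0<..} ?h"
    using absi by (subst set_integrable_abs_iff'[symmetric]) auto
  have "(LBINT x=ereal 0..\<infinity>. ?h x) = (LBINT s=-\<infinity>..\<infinity>. XX' W s *\<^sub>R ?h (XX W s))"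
  proof (rule interval_integral_substitution_integrable[OF _ DERIV_XX[OF W] _ _ _ lims])
    show "set_integrable lborel (einterval (- \<infinity>) \<infinity>) (\<lambda>s. XX' W s *\<^sub>R ?h (XX W s))"
      using sfun_integrable[OF W] sfun_eq[OF W] unfolding set_integrable_def by simp
    show "set_integrable lborel (einterval (ereal 0) \<infinity>) ?h" using hint by simp
  qed (use W in \<open>auto intro!: isCont_h XX_pos[OF W] isCont_XX'[OF W] less_imp_le[OF XX'_pos[OF W]]\<close>)
  also have "\<dots> = (\<integral>s. sfun W s \<partial>lborel)"
    by (simp add: interval_lebesgue_integral_le_eq set_lebesgue_integral_def sfun_eq[OF W])
  finally show "E_log_IG W = (\<integral>s. sfun W s \<partial>lborel)"
    unfolding E_log_IG_def by (simp add: interval_integral_to_infinity_eq)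
qed

definition nd :: "real \<Rightarrow> real \<Rightarrow> real" where "nd W s = normal_density 0 (1 / (2 * sqrt W)) s"

lemma nd_eq: assumes W: "W > 0" shows "nd W s = sqrt 2 * sqrt W / sqrt pi * exp (- (2 * W * s\<^sup>2))"
proof -
  have sW: "(1 / (2 * sqrt W))\<^sup>2 = 1 / (4 * W)" using W by (simp add: power_divide power_mult_distrib)
  have a: "2 * pi * (1 / (2 * sqrt W))\<^sup>2 = pi / (2 * W)" using W by (simp add: sW)
  have b: "- (s - 0)\<^sup>2 / (2 * (1 / (2 * sqrt W))\<^sup>2) = - (2 * W * s\<^sup>2)" using W by (simp add: sW)
  have c: "1 / sqrt (pi / (2 * W)) = sqrt 2 * sqrt W / sqrt pi"
    using W by (simp add: real_sqrt_divide real_sqrt_mult)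
  show ?thesis unfolding nd_def normal_density_def a b c by simp
qed

lemma nd_minus: "nd W (-s) = nd W s" by (simp add: nd_def normal_density_def)

definition kf :: "real \<Rightarrow> real \<Rightarrow> real" where "kf W s = nd W s * (s * LL s / rr s)"

lemma sfun_sym: "sfun W s + sfun W (-s) = -4 * kf W s - 2 * ln W * nd W s"
  unfolding sfun_def kf_def nd_def[symmetric] nd_minus LL_minus rr_minus
  using rr_pos[of s] by (simp add: field_simps)

lemma sym_main:
  assumes W: "W > 0"
  shows "integrable lborel (kf W)" and "E_log_IG W = - ln W - 2 * (\<integral>s. kf W s \<partial>lborel)"
proof -
  have i1: "integrable lborel (sfun W)" by (rule sfun_integrable[OF W])
  have i2: "integrable lborel (\<lambda>s. sfun W (-s))"
    using lborel_integrable_real_affine[OF i1, of "-1" 0] by simp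
  have ind: "integrable lborel (nd W)" unfolding nd_def[abs_def] using W by simp
  have eq: "kf W s = - (sfun W s + sfun W (-s) + 2 * ln W * nd W s) / 4" for s
    using sfun_sym[of W s] by simp
  show ik: "integrable lborel (kf W)"
    unfolding eq[abs_def] using i1 i2 ind by (intro integrable_divide Bochner_Integration.integrable_add Bochner_Integration.integrable_minus integrable_mult_right) auto
  have int_refl: "(\<integral>s. sfun W (-s) \<partial>lborel) = (\<integral>s. sfun W s \<partial>lborel)"
    using lborel_integral_real_affine[of "-1" "sfun W" 0] by simp
  have ndint: "(\<integral>s. nd W s \<partial>lborel) = 1" unfolding nd_def[abs_def] using W by simp
  have "(\<integral>s. kf W s \<partial>lborel) = - ((\<integral>s. sfun W s \<partial>lborel) + (\<integral>s. sfun W (-s) \<partial>lborel) + 2 * ln W * (\<integral>s. nd W s \<partial>lborel)) / 4"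
    unfolding eq[abs_def] using i1 i2 ind by simp
  also have "\<dots> = - (2 * (\<integral>s. sfun W s \<partial>lborel) + 2 * ln W) / 4" by (simp add: int_refl ndint)
  finally show "E_log_IG W = - ln W - 2 * (\<integral>s. kf W s \<partial>lborel)"
    using subst_main(2)[OF W] by simp
qed

definition GG :: "real \<Rightarrow> real \<Rightarrow> real" where "GG W s = exp (- (2 * W * s\<^sup>2)) * (s * LL s / rr s)"
definition fq :: "real \<Rightarrow> real \<Rightarrow> real" where "fq W q = exp (- (2 * W * q)) * (LL (sqrt q) / rr (sqrt q))"

lemma GG_nonneg: "GG W s \<ge> 0"
  unfolding GG_def using sLL_nonneg[of s] rr_pos[of s] by simp

lemma GG_minus: "GG W (-s) = GG W s"
  unfolding GG_def by (simp add: LL_minus)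

lemma GG_meas[measurable]: "GG W \<in> borel_measurable borel"
  unfolding GG_def[abs_def] by measurable

lemma fq_meas[measurable]: "fq W \<in> borel_measurable borel"
  unfolding fq_def[abs_def] by measurable

lemma kf_GG: "W > 0 \<Longrightarrow> kf W s = (sqrt 2 * sqrt W / sqrt pi) * GG W s"
  unfolding kf_def GG_def nd_eq by simp

lemma GG_integrable: assumes W: "W > 0" shows "integrable lborel (GG W)"
proof -
  have "GG W s = (sqrt pi / (sqrt 2 * sqrt W)) * kf W s" for s
    using kf_GG[OF W, of s] W by (simp add: field_simps)
  hence "GG W = (\<lambda>s. (sqrt pi / (sqrt 2 * sqrt W)) * kf W s)" by auto
  thus ?thesis using sym_main(1)[OF W] by simp
qed

lemma int_kf_GG: assumes W: "W > 0"
  shows "(\<integral>s. kf W s \<partial>lborel) = (sqrt 2 * sqrt W / sqrt pi) * (\<integral>s. GG W s \<partial>lborel)"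
  using kf_GG[OF W] by simp

lemma GG_half: assumes W: "W > 0"
  shows "(\<integral>s. GG W s \<partial>lborel) = 2 * (LBINT s:{0<..}. GG W s)"
    and "set_integrable lborel {0<..} (GG W)"
proof -
  have iG: "integrable lborel (GG W)" by (rule GG_integrable[OF W])
  show si: "set_integrable lborel {0<..} (GG W)"
    unfolding set_integrable_def by (rule integrable_mult_indicator[OF _ iG]) simp
  define H where "H s = indicator {0<..} s *\<^sub>R GG W s" for s
  have iH: "integrable lborel H" using si unfolding set_integrable_def H_def .
  have iH2: "integrable lborel (\<lambda>s. H (-s))"
    using lborel_integrable_real_affine[OF iH, of "-1" 0] by simp
  have pt: "GG W s = H s + H (-s)" for s
  proof (cases "s > 0")
    case True thus ?thesis by (simp add: H_def)
  next
    case False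
    show ?thesis
    proof (cases "s = 0")
      case True thus ?thesis by (simp add: H_def GG_def LL_def rr_def)
    next
      case False
      with \<open>\<not> s > 0\<close> have "s < 0" by simp
      thus ?thesis by (simp add: H_def GG_minus)
    qed
  qed
  have "(\<integral>s. GG W s \<partial>lborel) = (\<integral>s. H s \<partial>lborel) + (\<integral>s. H (-s) \<partial>lborel)"
    unfolding pt using iH iH2 by simp
  also have "(\<integral>s. H (-s) \<partial>lborel) = (\<integral>s. H s \<partial>lborel)"
    using lborel_integral_real_affine[of "-1" H 0] by simp
  finally show "(\<integral>s. GG W s \<partial>lborel) = 2 * (LBINT s:{0<..}. GG W s)"
    unfolding set_lebesgue_integral_def H_def by simp
qed

lemma isCont_LL: "isCont LL s" by (rule DERIV_isCont[OF DERIV_LL])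

lemma fq_sq: "s \<ge> 0 \<Longrightarrow> fq W (s\<^sup>2) * (2 * s) = 2 * GG W s"
  unfolding fq_def GG_def by simp

lemma q_subst: assumes W: "W > 0"
  shows "set_integrable lborel {0<..} (fq W)"
    and "(LBINT q:{0<..}. fq W q) = 2 * (LBINT s:{0<..}. GG W s)"
proof -
  have lims: "((ereal \<circ> power2 \<circ> real_of_ereal) \<longlongrightarrow> ereal 0) (at_right (ereal 0))"
             "((ereal \<circ> power2 \<circ> real_of_ereal) \<longlongrightarrow> \<infinity>) (at_left \<infinity>)"
    unfolding ereal_tendsto_simps1 ereal_tendsto_simps2
    by (auto intro!: tendsto_eq_intros filterlim_pow_at_top filterlim_ident)
  have fG: "set_integrable lborel (einterval (ereal 0) \<infinity>) (\<lambda>s. fq W (s\<^sup>2) * (2 * s))"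
  proof -
    have "set_integrable lborel {0<..} (\<lambda>s. 2 * GG W s)"
      using GG_half(2)[OF W] by (simp add: set_integrable_mult_right)
    moreover have "set_integrable lborel {0<..} (\<lambda>s. 2 * GG W s) = set_integrable lborel {0<..} (\<lambda>s. fq W (s\<^sup>2) * (2 * s))"
      by (rule set_integrable_cong) (auto simp: fq_sq)
    ultimately show ?thesis by simp
  qed
  have cont: "isCont (fq W) (x\<^sup>2)" if "x > 0" for x
    unfolding fq_def[abs_def] using that rr_pos[of x] rr_pos[of "sqrt (x\<^sup>2)"]
    by (intro isCont_mult isCont_divide continuous_intros isCont_o2[OF _ isCont_LL] isCont_o2[OF _ isCont_rr])
       (auto intro!: continuous_intros)
  have nn: "0 \<le> fq W (x\<^sup>2)" if "x > 0" for x
    unfolding fq_def using that LL_nonneg[of x] rr_pos[of x] by simp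
  note S = interval_integral_substitution_nonneg[of "ereal 0" \<infinity> power2 "\<lambda>x. 2 * x" "fq W", OF _ _ _ _ _ _ lims fG]
  have S1: "set_integrable lborel (einterval (ereal 0) \<infinity>) (fq W)"
    by (rule S(1)) (auto intro!: derivative_eq_intros cont nn continuous_intros)
  thus "set_integrable lborel {0<..} (fq W)" by simp
  have "(LBINT q=ereal 0..\<infinity>. fq W q) = (LBINT s=ereal 0..\<infinity>. fq W (s\<^sup>2) * (2 * s))"
    by (rule S(2)) (auto intro!: derivative_eq_intros cont nn continuous_intros)
  also have "\<dots> = (LBINT s:{0<..}. 2 * GG W s)"
    unfolding interval_integral_to_infinity_eq by (rule set_lebesgue_integral_cong) (auto simp: fq_sq)
  finally show "(LBINT q:{0<..}. fq W q) = 2 * (LBINT s:{0<..}. GG W s)"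
    unfolding interval_integral_to_infinity_eq by (simp add: set_integral_mult_right)
qed

lemma gauss_half: assumes W: "W > 0"
  shows "(\<integral>\<^sup>+ t. ennreal (indicator {0..} t * exp (- (2 * W * t\<^sup>2))) \<partial>lborel) = ennreal (sqrt pi / (2 * sqrt (2 * W)))"
proof -
  have hb: "has_bochner_integral lborel (\<lambda>x. indicator {0..} x * exp (- x\<^sup>2)) (sqrt pi / 2)"
    using gaussian_moment_0 by simp
  have g0: "(\<integral>\<^sup>+ x. ennreal (indicator {0..} x * exp (- x\<^sup>2)) \<partial>lborel) = ennreal (sqrt pi / 2)"
    using nn_integral_eq_integral[OF integrable.intros[OF hb]] has_bochner_integral_integral_eq[OF hb]
    by simp
  define c where "c = 1 / sqrt (2 * W)"
  have c: "c > 0" using W by (simp add: c_def)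
  have "(\<integral>\<^sup>+ t. ennreal (indicator {0..} t * exp (- (2 * W * t\<^sup>2))) \<partial>lborel)
      = ennreal \<bar>c\<bar> * (\<integral>\<^sup>+ x. ennreal (indicator {0..} (0 + c * x) * exp (- (2 * W * (0 + c * x)\<^sup>2))) \<partial>lborel)"
    by (rule nn_integral_real_affine) (use c in auto)
  also have "(\<lambda>x. ennreal (indicator {0..} (0 + c * x) * exp (- (2 * W * (0 + c * x)\<^sup>2)))) = (\<lambda>x. ennreal (indicator {0..} x * exp (- x\<^sup>2)))"
  proof
    fix x
    have "indicator {0..} (0 + c * x) = (indicator {0..} x :: real)" using c
      by (simp add: indicator_def zero_le_mult_iff)
    moreover have "2 * W * (c * x)\<^sup>2 = x\<^sup>2" using W unfolding c_def by (simp add: power_mult_distrib power_divide)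
    ultimately show "ennreal (indicator {0..} (0 + c * x) * exp (- (2 * W * (0 + c * x)\<^sup>2))) = ennreal (indicator {0..} x * exp (- x\<^sup>2))"
      by simp
  qed
  also have "ennreal \<bar>c\<bar> * (\<integral>\<^sup>+ x. ennreal (indicator {0..} x * exp (- x\<^sup>2)) \<partial>lborel) = ennreal (c * (sqrt pi / 2))"
    unfolding g0 using c by (simp add: ennreal_mult'[symmetric])
  also have "c * (sqrt pi / 2) = sqrt pi / (2 * sqrt (2 * W))" by (simp add: c_def)
  finally show ?thesis .
qed

lemma b_to_u: assumes W: "W > 0"
  shows "(\<integral>\<^sup>+ b. ennreal (indicator {0..} b * (exp (- (2 * W * b)) / (1 + b))) \<partial>lborel)
       = (\<integral>\<^sup>+ u. ennreal (indicator {0..} u * (exp (- u) / (u + 2 * W))) \<partial>lborel)"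
proof -
  have "(\<integral>\<^sup>+ u. ennreal (indicator {0..} u * (exp (- u) / (u + 2 * W))) \<partial>lborel)
      = ennreal \<bar>2 * W\<bar> * (\<integral>\<^sup>+ b. ennreal (indicator {0..} (0 + 2 * W * b) * (exp (- (0 + 2 * W * b)) / ((0 + 2 * W * b) + 2 * W))) \<partial>lborel)"
    by (rule nn_integral_real_affine) (use W in auto)
  also have "\<dots> = (\<integral>\<^sup>+ b. ennreal (2 * W) * ennreal (indicator {0..} (0 + 2 * W * b) * (exp (- (0 + 2 * W * b)) / ((0 + 2 * W * b) + 2 * W))) \<partial>lborel)"
  proof -
    have e: "ennreal \<bar>2 * W\<bar> = ennreal (2 * W)" using W by simp
    show ?thesis by (simp only: e) (rule nn_integral_cmult[symmetric], measurable)
  qed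
  also have "\<dots> = (\<integral>\<^sup>+ b. ennreal (indicator {0..} b * (exp (- (2 * W * b)) / (1 + b))) \<partial>lborel)"
  proof (rule nn_integral_cong)
    fix b :: real
    have i: "indicator {0..} (2 * W * b) = (indicator {0..} b :: real)" using W
      by (simp add: indicator_def zero_le_mult_iff)
    have e: "2 * W * (exp (- (2 * W * b)) / (2 * W * b + 2 * W)) = exp (- (2 * W * b)) / (1 + b)"
    proof -
      have "2 * W * b + 2 * W = (2 * W) * (1 + b)" by (simp add: algebra_simps)
      thus ?thesis using W by simp
    qed
    have r: "2 * W * (indicator {0..} (0 + 2 * W * b) * (exp (- (0 + 2 * W * b)) / ((0 + 2 * W * b) + 2 * W)))
        = indicator {0..} b * (exp (- (2 * W * b)) / (1 + b))"
    proof -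
      have "2 * W * (indicator {0..} b * (exp (- (2 * W * b)) / (2 * W * b + 2 * W)))
          = indicator {0..} b * (2 * W * (exp (- (2 * W * b)) / (2 * W * b + 2 * W)))"
        by (rule mult.left_commute)
      thus ?thesis unfolding add_0_left i e .
    qed
    have "ennreal (2 * W) * ennreal (indicator {0..} (0 + 2 * W * b) * (exp (- (0 + 2 * W * b)) / ((0 + 2 * W * b) + 2 * W)))
        = ennreal (2 * W * (indicator {0..} (0 + 2 * W * b) * (exp (- (0 + 2 * W * b)) / ((0 + 2 * W * b) + 2 * W))))"
      by (rule ennreal_mult'[symmetric]) (use W in simp)
    also note r
    finally show "ennreal (2 * W) * ennreal (indicator {0..} (0 + 2 * W * b) * (exp (- (0 + 2 * W * b)) / ((0 + 2 * W * b) + 2 * W)))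
        = ennreal (indicator {0..} b * (exp (- (2 * W * b)) / (1 + b)))" .
  qed
  finally show ?thesis by simp
qed

definition Kf :: "real \<Rightarrow> real \<Rightarrow> real \<Rightarrow> ennreal" where
  "Kf W t q = ennreal (if 0 \<le> t \<and> t\<^sup>2 \<le> q then exp (- (2 * W * q)) / (1 + q - t\<^sup>2) else 0)"

lemma Kf_meas[measurable]: "(\<lambda>(t, q). Kf W t q) \<in> borel_measurable (lborel \<Otimes>\<^sub>M lborel)"
  unfolding Kf_def by measurable

lemma Kf_meas2[measurable]: "Kf W t \<in> borel_measurable borel"
  unfolding Kf_def by measurable

lemma Kf_meas3[measurable]: "(\<lambda>t. Kf W t q) \<in> borel_measurable borel"
  unfolding Kf_def by measurable

lemma inner_FTC:
  assumes q: "q \<ge> 0"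
  shows "(\<integral>\<^sup>+ t. Kf W t q \<partial>lborel) = ennreal (fq W q)"
proof -
  define R where "R = rr (sqrt q)"
  have R2: "R\<^sup>2 = 1 + q" unfolding R_def using rr_sq[of "sqrt q"] q by simp
  have Rgt: "R > sqrt q" unfolding R_def using rr_gt_abs[of "sqrt q"] by simp
  have Rpos: "R > 0" unfolding R_def by (rule rr_pos)
  define F where "F t = (ln (R + t) - ln (R - t)) / (2 * R)" for t
  have set_eq: "0 \<le> t \<and> t\<^sup>2 \<le> q \<longleftrightarrow> t \<in> {0..sqrt q}" for t
  proof
    assume "0 \<le> t \<and> t\<^sup>2 \<le> q" thus "t \<in> {0..sqrt q}" using real_le_rsqrt by auto
  next
    assume t: "t \<in> {0..sqrt q}"
    hence "t\<^sup>2 \<le> (sqrt q)\<^sup>2" by (intro power_mono) auto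
    thus "0 \<le> t \<and> t\<^sup>2 \<le> q" using t q by simp
  qed
  have pt: "Kf W t q = ennreal (exp (- (2 * W * q))) * (ennreal (1 / (1 + q - t\<^sup>2)) * indicator {0..sqrt q} t)" for t
    unfolding Kf_def set_eq by (auto simp: indicator_def ennreal_mult'[symmetric])
  have "(\<integral>\<^sup>+ t. Kf W t q \<partial>lborel) = ennreal (exp (- (2 * W * q))) * (\<integral>\<^sup>+ t. ennreal (1 / (1 + q - t\<^sup>2)) * indicator {0..sqrt q} t \<partial>lborel)"
    unfolding pt by (rule nn_integral_cmult) measurable
  also have "(\<integral>\<^sup>+ t. ennreal (1 / (1 + q - t\<^sup>2)) * indicator {0..sqrt q} t \<partial>lborel) = ennreal (F (sqrt q) - F 0)"
  proof (rule nn_integral_FTC_Icc)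
    show "(\<lambda>t. 1 / (1 + q - t\<^sup>2)) \<in> borel_measurable borel" by measurable
    show "0 \<le> sqrt q" using q by simp
    fix x assume x: "x \<in> {0..sqrt q}"
    hence x2: "x\<^sup>2 \<le> q" using set_eq by auto
    thus "0 \<le> 1 / (1 + q - x\<^sup>2)" by simp
    have a: "R + x > 0" "R - x > 0" using x Rgt Rpos by auto
    have pp: "(R + x) * (R - x) > 0" using a by simp
    have ne: "R + x \<noteq> 0" "R - x \<noteq> 0" "R \<noteq> 0" "(R + x) * (R - x) \<noteq> 0" "R * R - x * x \<noteq> 0"
      using a Rpos pp by (auto simp: algebra_simps)
    have d1: "((\<lambda>t. ln (R + t)) has_real_derivative (inverse (R + x) * (0 + 1))) (at x)"
      by (rule DERIV_chain2[where f=ln and g="\<lambda>t. R + t", OF DERIV_ln[OF a(1)] DERIV_add[OF DERIV_const DERIV_ident]])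
    have d2: "((\<lambda>t. ln (R - t)) has_real_derivative (inverse (R - x) * (0 - 1))) (at x)"
      by (rule DERIV_chain2[where f=ln and g="\<lambda>t. R - t", OF DERIV_ln[OF a(2)] DERIV_diff[OF DERIV_const DERIV_ident]])
    have "(F has_real_derivative ((inverse (R + x) * (0 + 1) - inverse (R - x) * (0 - 1)) / (2 * R))) (at x)"
      unfolding F_def[abs_def] by (rule DERIV_cdivide[OF DERIV_diff[OF d1 d2]])
    moreover have "(inverse (R + x) * (0 + 1) - inverse (R - x) * (0 - 1)) / (2 * R) = 1 / ((R + x) * (R - x))"
      using ne by (simp add: field_simps)
    ultimately have "(F has_real_derivative (1 / ((R + x) * (R - x)))) (at x)" by simp
    moreover have "1 / ((R + x) * (R - x)) = 1 / (1 + q - x\<^sup>2)"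
    proof -
      have "(R + x) * (R - x) = 1 + q - x\<^sup>2" using R2 by (simp add: power2_eq_square algebra_simps)
      thus ?thesis by simp
    qed
    ultimately show "(F has_real_derivative 1 / (1 + q - x\<^sup>2)) (at x)" by simp
  qed
  also have "F (sqrt q) - F 0 = LL (sqrt q) / R"
  proof -
    have "(sqrt q + R) * (R - sqrt q) = 1" unfolding R_def by (rule pq_prod)
    hence p: "(R + sqrt q) * (R - sqrt q) = 1" by (simp add: add.commute)
    have "R - sqrt q = inverse (R + sqrt q)" by (rule inverse_unique[OF p, symmetric])
    moreover have "R + sqrt q > 0" using Rpos q by (simp add: add_pos_nonneg)
    ultimately have "ln (R - sqrt q) = - ln (R + sqrt q)" by (simp add: ln_inverse)
    thus ?thesis unfolding F_def LL_def R_def[symmetric] using Rpos by (simp add: field_simps add.commute)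
  qed
  finally have "(\<integral>\<^sup>+ t. Kf W t q \<partial>lborel) = ennreal (exp (- (2 * W * q))) * ennreal (LL (sqrt q) / R)" .
  also have "\<dots> = ennreal (fq W q)" unfolding fq_def R_def by (rule ennreal_mult'[symmetric]) simp
  finally show ?thesis .
qed

lemma shear:
  assumes W: "W > 0"
  shows "(\<integral>\<^sup>+ q. ennreal (indicator {0..} q * fq W q) \<partial>lborel)
       = (\<integral>\<^sup>+ t. ennreal (indicator {0..} t * exp (- (2 * W * t\<^sup>2))) \<partial>lborel)
         * (\<integral>\<^sup>+ b. ennreal (indicator {0..} b * (exp (- (2 * W * b)) / (1 + b))) \<partial>lborel)"
proof -
  define B where "B = (\<integral>\<^sup>+ b. ennreal (indicator {0..} b * (exp (- (2 * W * b)) / (1 + b))) \<partial>lborel)"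
  have s1: "(\<integral>\<^sup>+ t. ennreal (indicator {0..} t * exp (- (2 * W * t\<^sup>2))) \<partial>lborel) * B
      = (\<integral>\<^sup>+ t. ennreal (indicator {0..} t * exp (- (2 * W * t\<^sup>2))) * B \<partial>lborel)"
    by (rule nn_integral_multc[symmetric]) measurable
  have s2: "ennreal (indicator {0..} t * exp (- (2 * W * t\<^sup>2))) * B = (\<integral>\<^sup>+ q. Kf W t q \<partial>lborel)" for t
  proof (cases "t \<ge> 0")
    case False
    hence "Kf W t q = 0" for q unfolding Kf_def by simp
    thus ?thesis using False by simp
  next
    case True
    have "(\<integral>\<^sup>+ q. Kf W t q \<partial>lborel) = ennreal \<bar>1\<bar> * (\<integral>\<^sup>+ b. Kf W t (t\<^sup>2 + 1 * b) \<partial>lborel)"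
      by (rule nn_integral_real_affine) auto
    also have "\<dots> = (\<integral>\<^sup>+ b. ennreal (exp (- (2 * W * t\<^sup>2))) * ennreal (indicator {0..} b * (exp (- (2 * W * b)) / (1 + b))) \<partial>lborel)"
    proof -
      have "Kf W t (t\<^sup>2 + 1 * b) = ennreal (exp (- (2 * W * t\<^sup>2))) * ennreal (indicator {0..} b * (exp (- (2 * W * b)) / (1 + b)))" for b
      proof (cases "b \<ge> 0")
        case True
        have "exp (- (2 * W * (t\<^sup>2 + b))) / (1 + b) = exp (- (2 * W * t\<^sup>2)) * (exp (- (2 * W * b)) / (1 + b))"
          by (simp add: algebra_simps exp_add[symmetric])
        thus ?thesis using True \<open>t \<ge> 0\<close> unfolding Kf_def
          by (simp add: ennreal_mult'[symmetric])
      next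
        case False thus ?thesis unfolding Kf_def by simp
      qed
      thus ?thesis by simp
    qed
    also have "\<dots> = ennreal (exp (- (2 * W * t\<^sup>2))) * B"
      unfolding B_def by (rule nn_integral_cmult) measurable
    finally show ?thesis using True by simp
  qed
  have s3: "(\<integral>\<^sup>+ t. (\<integral>\<^sup>+ q. Kf W t q \<partial>lborel) \<partial>lborel) = (\<integral>\<^sup>+ q. (\<integral>\<^sup>+ t. Kf W t q \<partial>lborel) \<partial>lborel)"
    using lborel_pair.Fubini[OF Kf_meas[of W]] by simp
  have s4: "(\<integral>\<^sup>+ t. Kf W t q \<partial>lborel) = ennreal (indicator {0..} q * fq W q)" for q
  proof (cases "q \<ge> 0")
    case True thus ?thesis using inner_FTC[OF True, of W] by simp
  next
    case False
    hence "Kf W t q = 0" for t unfolding Kf_def by (auto simp: not_le) (smt (verit) zero_le_power2)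
    thus ?thesis using False by simp
  qed
  show ?thesis unfolding B_def[symmetric] s1 s2 s3 s4 ..
qed

lemma exp_int: "set_integrable lborel {0<..} (\<lambda>u::real. exp (- u))" "(LBINT u:{0<..}. exp (- u::real)) = 1"
proof -
  have lA: "(((\<lambda>u. - exp (- u)) \<circ> real_of_ereal) \<longlongrightarrow> - 1) (at_right (ereal 0))"
    unfolding ereal_tendsto_simps1 by (auto intro!: tendsto_eq_intros)
  have lB: "(((\<lambda>u. - exp (- u)) \<circ> real_of_ereal) \<longlongrightarrow> 0) (at_left \<infinity>)"
    unfolding ereal_tendsto_simps1
    by (rule tendsto_minus_cancel_left[THEN iffD1]) (simp add: exp_at_bot filterlim_uminus_at_bot_at_top filterlim_compose[OF exp_at_bot])
  note R = interval_integral_FTC_nonneg[of "ereal 0" \<infinity> "\<lambda>u. - exp (- u)" "\<lambda>u. exp (- u)", OF _ _ _ _ lA lB]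
  have "set_integrable lborel (einterval (ereal 0) \<infinity>) (\<lambda>u. exp (- u))"
    by (rule R(1)) (auto intro!: derivative_eq_intros continuous_intros)
  thus "set_integrable lborel {0<..} (\<lambda>u::real. exp (- u))" by simp
  have "(LBINT u=ereal 0..\<infinity>. exp (- u)) = 0 - (- 1)"
    by (rule R(2)) (auto intro!: derivative_eq_intros continuous_intros)
  thus "(LBINT u:{0<..}. exp (- u::real)) = 1" by (simp add: interval_integral_to_infinity_eq)
qed

lemma U_integrable: fixes W :: real assumes W: "W > 0"
  shows "set_integrable lborel {0<..} (\<lambda>u. exp (- u) / (u + 2 * W))"
proof -
  have "set_integrable lborel {0<..} (\<lambda>u. (1 / (2 * W)) * exp (- u))"
    using exp_int(1) by (rule set_integrable_mult_right)
  thus ?thesis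
  proof (rule set_integrable_bound)
    show "set_borel_measurable lborel {0<..} (\<lambda>u. exp (- u) / (u + 2 * W))"
      unfolding set_borel_measurable_def by measurable
    show "AE x in lborel. x \<in> {0<..} \<longrightarrow> norm (exp (- x) / (x + 2 * W)) \<le> norm (1 / (2 * W) * exp (- x))"
      using W by (auto intro!: AE_I2 simp: field_simps)
  qed
qed

lemma fq_nonneg: "q \<ge> 0 \<Longrightarrow> fq W q \<ge> 0"
  unfolding fq_def using LL_nonneg[of "sqrt q"] rr_pos[of "sqrt q"] by simp

lemma fq_0: "fq W 0 = 0"
  unfolding fq_def LL_def rr_def by simp

lemma formula1:
  assumes W: "W > 0"
  shows "E_log_IG W = - ln W - (LBINT u:{0<..}. exp (- u) / (u + 2 * W))"
proof -
  define U where "U = (LBINT u:{0<..}. exp (- u) / (u + 2 * W))"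
  define L where "L = (LBINT q:{0<..}. fq W q)"
  define C where "C = sqrt 2 * sqrt W / sqrt pi"
  define c1 where "c1 = sqrt pi / (2 * sqrt (2 * W))"
  have kfL: "(\<integral>s. kf W s \<partial>lborel) = C * L"
    unfolding C_def L_def using int_kf_GG[OF W] GG_half(1)[OF W] q_subst(2)[OF W] by simp
  have L0: "L \<ge> 0" unfolding L_def set_lebesgue_integral_def
    by (rule integral_nonneg_AE) (auto intro!: AE_I2 fq_nonneg simp: indicator_def)
  have U0: "U \<ge> 0" unfolding U_def set_lebesgue_integral_def
    using W by (intro integral_nonneg_AE) (auto intro!: AE_I2 simp: indicator_def)
  have nnL: "(\<integral>\<^sup>+ q. ennreal (indicator {0..} q * fq W q) \<partial>lborel) = ennreal L"
  proof -
    have "(\<integral>\<^sup>+ q. ennreal (indicator {0<..} q *\<^sub>R fq W q) \<partial>lborel) = ennreal L"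
      unfolding L_def set_lebesgue_integral_def
      by (rule nn_integral_eq_integral)
         (use q_subst(1)[OF W] in \<open>auto intro!: AE_I2 fq_nonneg simp: set_integrable_def indicator_def\<close>)
    moreover have eqf: "indicator {0<..} q * fq W q = indicator {0..} q * fq W q" for q :: real
      by (cases "q = 0") (auto simp: indicator_def fq_0)
    ultimately show ?thesis by (simp only: eqf real_scaleR_def)
  qed
  have nnU: "(\<integral>\<^sup>+ u. ennreal (indicator {0..} u * (exp (- u) / (u + 2 * W))) \<partial>lborel) = ennreal U"
  proof -
    have "(\<integral>\<^sup>+ u. ennreal (indicator {0<..} u *\<^sub>R (exp (- u) / (u + 2 * W))) \<partial>lborel) = ennreal U"
      unfolding U_def set_lebesgue_integral_def
      by (rule nn_integral_eq_integral)
         (use U_integrable[OF W] W in \<open>auto intro!: AE_I2 simp: set_integrable_def indicator_def\<close>)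
    moreover have "(\<integral>\<^sup>+ u. ennreal (indicator {0..} u * (exp (- u) / (u + 2 * W))) \<partial>lborel)
        = (\<integral>\<^sup>+ u. ennreal (indicator {0<..} u *\<^sub>R (exp (- u) / (u + 2 * W))) \<partial>lborel)"
      by (rule nn_integral_cong_AE, rule AE_mp[OF AE_lborel_singleton[of 0] AE_I2]) (auto simp: indicator_def)
    ultimately show ?thesis by simp
  qed
  have "ennreal L = ennreal c1 * ennreal U"
    using shear[OF W] gauss_half[OF W] b_to_u[OF W] nnL nnU unfolding c1_def by simp
  also have "\<dots> = ennreal (c1 * U)" using W by (simp add: c1_def ennreal_mult'[symmetric])
  finally have LU: "L = c1 * U" using L0 U0 W by (simp add: c1_def)
  have "2 * C * c1 = 1"
    unfolding C_def c1_def using W by (simp add: real_sqrt_mult field_simps)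
  hence "2 * (\<integral>s. kf W s \<partial>lborel) = U" unfolding kfL LU by (simp add: mult_ac)
  thus ?thesis using sym_main(2)[OF W] unfolding U_def by simp
qed

lemma GammaB: fixes s :: real assumes s: "s > 0"
  shows "has_bochner_integral lborel (\<lambda>t. indicator {0<..} t * (t powr (s - 1) * exp (- t))) (Gamma s)"
proof -
  have m: "(\<lambda>t. indicator {0<..} t * (t powr (s - 1) * exp (- t))) \<in> borel_measurable lborel" by measurable
  have nn: "AE t in lborel. 0 \<le> indicator {0<..} t * (t powr (s - 1) * exp (- t))" by (rule AE_I2) (simp add: indicator_def)
  have g: "0 \<le> Gamma s" using Gamma_real_pos[OF s] by simp
  have "indicator {0..} t * t powr (s - 1) / exp t = indicator {0<..} t * (t powr (s - 1) * exp (- t))" for t :: real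
    by (cases "t = 0") (auto simp: indicator_def exp_minus field_simps)
  hence eq: "(\<integral>\<^sup>+ t. ennreal (indicator {0<..} t * (t powr (s - 1) * exp (- t))) \<partial>lborel) = ennreal (Gamma s)"
    using Gamma_conv_nn_integral_real[OF s] by simp
  show ?thesis by (rule has_bochner_integral_nn_integral[OF m nn g eq])
qed

lemma powr_diff_bound:
  fixes t h :: real
  assumes t: "t > 0" and h: "0 < h" "h \<le> 1"
  shows "\<bar>(t powr h - 1) / h\<bar> \<le> 2 * t powr (-1/2) + t powr 2"
proof (cases "t \<le> 1")
  case True
  have e: "t powr h = exp (h * ln t)" using t by (simp add: powr_def)
  have a: "1 - t powr h \<le> - (h * ln t)" unfolding e using exp_ge_add_one_self[of "h * ln t"] by linarith
  have b: "t powr h \<le> 1" using powr_mono2[of h t 1] True t h by simp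
  have c: "- ln t \<le> 2 * t powr (-1/2)"
  proof -
    have "ln (t powr (-1/2)) \<le> t powr (-1/2) - 1" using t by (intro ln_le_minus_one) simp
    moreover have "ln (t powr (-1/2)) = (-1/2) * ln t" using t by (simp add: ln_powr)
    ultimately show ?thesis by simp
  qed
  have np: "(t powr h - 1) / h \<le> 0" using b h by (simp add: divide_nonpos_pos)
  have "\<bar>(t powr h - 1) / h\<bar> = - ((t powr h - 1) / h)" by (rule abs_of_nonpos[OF np])
  also have "\<dots> = (1 - t powr h) / h" by (simp add: minus_divide_left)
  also have "\<dots> \<le> - ln t" using a h by (simp add: divide_le_eq mult.commute)
  also have "\<dots> \<le> 2 * t powr (-1/2) + t powr 2" using c powr_ge_zero[of t 2] by linarith
  finally show ?thesis .
next
  case False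
  hence t1: "t \<ge> 1" by simp
  have e: "t powr h = exp (h * ln t)" using t by (simp add: powr_def)
  have lnt: "0 \<le> ln t" "ln t \<le> t" using t1 ln_le_minus_one[of t] by auto
  have a: "t powr h - 1 \<le> h * ln t * t powr h"
  proof -
    have "1 - h * ln t \<le> exp (- (h * ln t))" using exp_ge_add_one_self[of "- (h * ln t)"] by simp
    hence "(1 - h * ln t) * exp (h * ln t) \<le> exp (- (h * ln t)) * exp (h * ln t)" by (simp add: mult_right_mono)
    hence "(1 - h * ln t) * exp (h * ln t) \<le> 1" by (simp add: exp_add[symmetric])
    thus ?thesis unfolding e by (simp add: algebra_simps)
  qed
  have b: "1 \<le> t powr h" using t1 h by (simp add: ge_one_powr_ge_zero)
  have c: "t powr h \<le> t" using t1 h powr_mono[of h 1 t] by simp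
  have "\<bar>(t powr h - 1) / h\<bar> = (t powr h - 1) / h" using b h by simp
  also have "\<dots> \<le> ln t * t powr h" using a h by (simp add: divide_le_eq mult_ac)
  also have "\<dots> \<le> t * t" using lnt c b by (intro mult_mono) auto
  also have "\<dots> = t powr 2" using t by (simp add: powr_numeral power2_eq_square)
  also have "\<dots> \<le> 2 * t powr (-1/2) + t powr 2" by simp
  finally show ?thesis .
qed

lemma ln_exp_integral:
  "has_bochner_integral lborel (\<lambda>t::real. indicator {0<..} t * (ln t * exp (- t))) (- euler_mascheroni :: real)"
proof -
  define h where "h k = 1 / (real k + 2)" for k :: nat
  have hpos: "0 < h k" "h k \<le> 1" for k unfolding h_def by auto
  have hne: "h k \<noteq> 0" for k using hpos(1)[of k] by simp
  define s where "s k t = indicator {0<..} t * ((t powr (h k) - 1) / h k * exp (- t))" for k t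
  define f where "f t = indicator {0<..} t * (ln t * exp (- t))" for t :: real
  define w where "w t = indicator {0<..} t * ((2 * t powr (-1/2) + t powr 2) * exp (- t))" for t :: real
  have iw: "integrable lborel w"
  proof -
    have "integrable lborel (\<lambda>t::real. 2 * (indicator {0<..} t * (t powr (1/2 - 1) * exp (- t))) + indicator {0<..} t * (t powr (3 - 1) * exp (- t)))"
      using GammaB[of "1/2::real"] GammaB[of "3::real"] by (intro Bochner_Integration.integrable_add integrable_mult_right) (auto intro: integrable.intros)
    moreover have "(\<lambda>t::real. 2 * (indicator {0<..} t * (t powr (1/2 - 1) * exp (- t))) + indicator {0<..} t * (t powr (3 - 1) * exp (- t))) = w"
      unfolding w_def by (rule ext) (simp add: indicator_def algebra_simps)
    ultimately show ?thesis by simp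
  qed
  have int_s: "(\<integral>t. s k t \<partial>lborel) = (Gamma (1 + h k) - Gamma 1) / h k" for k
  proof -
    have g1: "has_bochner_integral lborel (\<lambda>t::real. indicator {0<..} t * (t powr (1 + h k - 1) * exp (- t))) (Gamma (1 + h k))"
      by (rule GammaB) (use hpos[of k] in simp)
    have g0: "has_bochner_integral lborel (\<lambda>t::real. indicator {0<..} t * (t powr (1 - 1) * exp (- t))) (Gamma 1)"
      by (rule GammaB) simp
    have "has_bochner_integral lborel (\<lambda>t::real. (indicator {0<..} t * (t powr (1 + h k - 1) * exp (- t)) - indicator {0<..} t * (t powr (1 - 1) * exp (- t))) / h k) ((Gamma (1 + h k) - Gamma 1) / h k)"
      by (intro has_bochner_integral_divide_zero has_bochner_integral_diff g1 g0)
    moreover have "(\<lambda>t::real. (indicator {0<..} t * (t powr (1 + h k - 1) * exp (- t)) - indicator {0<..} t * (t powr (1 - 1) * exp (- t))) / h k) = s k"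
      unfolding s_def by (rule ext) (auto simp: indicator_def field_simps)
    ultimately show ?thesis by (simp add: has_bochner_integral_integral_eq)
  qed
  have hl: "filterlim h (at 0) sequentially"
  proof (subst filterlim_at, intro conjI)
    show "\<forall>\<^sub>F k in sequentially. h k \<in> UNIV \<and> h k \<noteq> 0" using hne by simp
    show "h \<longlonglongrightarrow> 0" unfolding h_def by real_asymp
  qed
  have G: "((\<lambda>y. (Gamma y - Gamma 1) / (y - 1)) \<longlongrightarrow> Gamma 1 * Digamma 1) (at (1::real))"
    using has_field_derivative_Gamma[of "1::real" UNIV] by (simp add: has_field_derivative_iff)
  have hl1: "filterlim (\<lambda>k. 1 + h k) (at 1) sequentially"
  proof (subst filterlim_at, intro conjI)
    show "\<forall>\<^sub>F k in sequentially. 1 + h k \<in> UNIV \<and> 1 + h k \<noteq> 1" using hne by simp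
    show "(\<lambda>k. 1 + h k) \<longlonglongrightarrow> 1" unfolding h_def by real_asymp
  qed
  have lim1: "(\<lambda>k. (\<integral>t. s k t \<partial>lborel)) \<longlonglongrightarrow> - euler_mascheroni"
    unfolding int_s using filterlim_compose[OF G hl1] by simp
  have meas_s: "s k \<in> borel_measurable lborel" for k unfolding s_def by measurable
  have meas_f: "f \<in> borel_measurable lborel" unfolding f_def by measurable
  have pw: "AE t in lborel. (\<lambda>k. s k t) \<longlonglongrightarrow> f t"
  proof (rule AE_I2)
    fix t :: real
    show "(\<lambda>k. s k t) \<longlonglongrightarrow> f t"
    proof (cases "t > 0")
      case False thus ?thesis unfolding s_def f_def by simp
    next
      case True
      have "((\<lambda>y. exp (y * ln t)) has_real_derivative exp (0 * ln t) * ln t) (at 0)"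
        by (auto intro!: derivative_eq_intros)
      hence "((\<lambda>y. (exp (y * ln t) - exp (0 * ln t)) / (y - 0)) \<longlongrightarrow> ln t) (at 0)"
        by (simp add: has_field_derivative_iff)
      from filterlim_compose[OF this hl]
      have "(\<lambda>k. (exp (h k * ln t) - 1) / h k) \<longlonglongrightarrow> ln t" by simp
      hence "(\<lambda>k. (exp (h k * ln t) - 1) / h k * exp (- t)) \<longlonglongrightarrow> ln t * exp (- t)"
        by (intro tendsto_intros)
      moreover have "s k t = (exp (h k * ln t) - 1) / h k * exp (- t)" for k
        unfolding s_def using True by (simp add: powr_def)
      ultimately show ?thesis unfolding f_def using True by simp
    qed
  qed
  have bd: "AE t in lborel. norm (s k t) \<le> w t" for k
  proof (rule AE_I2)
    fix t :: real
    show "norm (s k t) \<le> w t"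
    proof (cases "t > 0")
      case False thus ?thesis unfolding s_def w_def by simp
    next
      case True
      have "\<bar>(t powr h k - 1) / h k * exp (- t)\<bar> = \<bar>(t powr h k - 1) / h k\<bar> * exp (- t)" by (simp add: abs_mult)
      also have "\<dots> \<le> (2 * t powr (-1/2) + t powr 2) * exp (- t)"
        by (intro mult_right_mono powr_diff_bound True hpos) simp
      finally show ?thesis unfolding s_def w_def using True by simp
    qed
  qed
  have fi: "integrable lborel f"
    by (rule integrable_dominated_convergence[OF meas_f meas_s iw pw bd])
  have "(\<lambda>k. (\<integral>t. s k t \<partial>lborel)) \<longlonglongrightarrow> (\<integral>t. f t \<partial>lborel)"
    by (rule integral_dominated_convergence[OF meas_f meas_s iw pw bd])
  with lim1 have feq: "(\<integral>t. f t \<partial>lborel) = - euler_mascheroni" by (rule LIMSEQ_unique[rotated])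
  show ?thesis using fi feq unfolding f_def has_bochner_integral_iff by simp
qed

definition phi :: "real \<Rightarrow> real" where "phi t = (ln t + euler_mascheroni) * exp (- t)"

lemma phi_meas[measurable]: "phi \<in> borel_measurable borel" unfolding phi_def[abs_def] by measurable

lemma phi_int: "set_integrable lborel {0<..} phi" "(LBINT t:{0<..}. phi t) = 0"
proof -
  have a: "integrable lborel (\<lambda>t::real. indicator {0<..} t * (ln t * exp (- t)))"
    using ln_exp_integral by (rule integrable.intros)
  have b: "integrable lborel (\<lambda>t::real. indicator {0<..} t * exp (- t))"
    using exp_int(1) unfolding set_integrable_def by simp
  have eq: "(\<lambda>t. indicator {0<..} t *\<^sub>R phi t) = (\<lambda>t. indicator {0<..} t * (ln t * exp (- t)) + euler_mascheroni * (indicator {0<..} t * exp (- t)))"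
    unfolding phi_def by (rule ext) (simp add: algebra_simps)
  show "set_integrable lborel {0<..} phi" unfolding set_integrable_def eq using a b by simp
  have "(LBINT t:{0<..}. phi t) = (LBINT t. indicator {0<..} t * (ln t * exp (- t))) + euler_mascheroni * (LBINT t. indicator {0<..} t * exp (- t))"
    unfolding set_lebesgue_integral_def eq using a b by simp
  also have "(LBINT t::real. indicator {0<..} t * (ln t * exp (- t))) = - euler_mascheroni"
    using ln_exp_integral by (rule has_bochner_integral_integral_eq)
  also have "(LBINT t::real. indicator {0<..} t * exp (- t)) = 1"
    using exp_int(2) unfolding set_lebesgue_integral_def by simp
  finally show "(LBINT t:{0<..}. phi t) = 0" by simp
qed

lemma split_J: fixes x :: real assumes x: "x > 0"
  shows "(LBINT t=ereal 0..ereal x. phi t) + (LBINT t:{x<..}. phi t) = 0"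
proof -
  have "(LBINT t=ereal 0..ereal x. phi t) + (LBINT t=ereal x..\<infinity>. phi t) = (LBINT t=ereal 0..\<infinity>. phi t)"
  proof (rule interval_integral_sum)
    show "interval_lebesgue_integrable lborel (min (ereal 0) (min (ereal x) \<infinity>)) (max (ereal 0) (max (ereal x) \<infinity>)) phi"
      using x phi_int(1) by (simp add: interval_integrable_to_infinity_eq min_def)
  qed
  thus ?thesis using phi_int(2) by (simp add: interval_integral_to_infinity_eq)
qed

lemma E1_integrable: fixes x :: real assumes x: "x > 0" shows "set_integrable lborel {x<..} (\<lambda>v. exp (- v) / v)"
proof -
  have "set_integrable lborel {x<..} (\<lambda>v::real. exp (- v))"
    by (rule set_integrable_subset[OF exp_int(1)]) (use x in auto)
  hence "set_integrable lborel {x<..} (\<lambda>v. (1 / x) * exp (- v))" by (rule set_integrable_mult_right)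
  thus ?thesis
  proof (rule set_integrable_bound)
    show "set_borel_measurable lborel {x<..} (\<lambda>v. exp (- v) / v)"
      unfolding set_borel_measurable_def by measurable
    show "AE v in lborel. v \<in> {x<..} \<longrightarrow> norm (exp (- v) / v) \<le> norm (1 / x * exp (- v))"
      using x by (auto intro!: AE_I2 simp: field_simps mult_left_mono)
  qed
qed

lemma E1_FTC: fixes x :: real assumes x: "x > 0"
  shows "(LBINT t:{x<..}. phi t) - (LBINT v:{x<..}. exp (- v) / v) = (ln x + euler_mascheroni) * exp (- x)"
proof -
  define F :: "real \<Rightarrow> real" where "F t = - ((ln t + euler_mascheroni) * exp (- t))" for t
  have pi: "set_integrable lborel {x<..} phi"
    by (rule set_integrable_subset[OF phi_int(1)]) (use x in auto)
  have ii: "set_integrable lborel (einterval (ereal x) \<infinity>) (\<lambda>t. phi t - exp (- t) / t)"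
    using set_integral_diff(1)[OF pi E1_integrable[OF x]] by simp
  have lA: "((F \<circ> real_of_ereal) \<longlongrightarrow> F x) (at_right (ereal x))"
  proof -
    have "isCont F x" unfolding F_def using x by (intro continuous_intros) auto
    hence "(F \<longlongrightarrow> F x) (at x)" by (simp add: isCont_def)
    hence "(F \<longlongrightarrow> F x) (at_right x)" by (rule tendsto_mono[OF at_le, rotated]) simp
    thus ?thesis unfolding ereal_tendsto_simps1 .
  qed
  have lB: "((F \<circ> real_of_ereal) \<longlongrightarrow> 0) (at_left \<infinity>)"
    unfolding ereal_tendsto_simps1 F_def by real_asymp
  have "(LBINT t=ereal x..\<infinity>. phi t - exp (- t) / t) = 0 - F x"
  proof (rule interval_integral_FTC_integrable[OF _ _ _ ii lA lB])
    show "ereal x < \<infinity>" by simp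
    fix t assume t: "ereal x < ereal t" "ereal t < \<infinity>"
    hence tp: "t > 0" using x by simp
    have "(F has_real_derivative (phi t - exp (- t) / t)) (at t)"
      unfolding F_def phi_def using tp by (auto intro!: derivative_eq_intros simp: field_simps)
    thus "(F has_vector_derivative phi t - exp (- t) / t) (at t)"
      by (simp add: has_real_derivative_iff_has_vector_derivative)
    show "isCont (\<lambda>t. phi t - exp (- t) / t) t" unfolding phi_def using tp by (intro continuous_intros) auto
  qed
  moreover have "(LBINT t=ereal x..\<infinity>. phi t - exp (- t) / t) = (LBINT t:{x<..}. phi t) - (LBINT v:{x<..}. exp (- v) / v)"
    unfolding interval_integral_to_infinity_eq using pi E1_integrable[OF x] by (simp add: set_integral_diff)
  ultimately show ?thesis unfolding F_def by simp
qed

lemma U_E1: fixes x :: real assumes x: "x > 0"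
  shows "(LBINT u:{0<..}. exp (- u) / (u + x)) = exp x * (LBINT v:{x<..}. exp (- v) / v)"
proof -
  have "(LBINT v:{x<..}. exp (- v) / v) = (LBINT y. indicator {x<..} (x + 1 * y) *\<^sub>R (exp (- (x + 1 * y)) / (x + 1 * y)))"
    using lborel_integral_real_affine[of 1 "\<lambda>v. indicator {x<..} v *\<^sub>R (exp (- v) / v)" x]
    unfolding set_lebesgue_integral_def by simp
  also have "\<dots> = (LBINT y. exp (- x) * (indicator {0<..} y *\<^sub>R (exp (- y) / (y + x))))"
    by (rule Bochner_Integration.integral_cong) (auto simp: indicator_def exp_add[symmetric] add.commute)
  also have "\<dots> = exp (- x) * (LBINT y. indicator {0<..} y *\<^sub>R (exp (- y) / (y + x)))"
    by (rule integral_mult_right_zero)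
  also have "\<dots> = exp (- x) * (LBINT u:{0<..}. exp (- u) / (u + x))"
    unfolding set_lebesgue_integral_def ..
  finally show ?thesis by (simp add: exp_minus field_simps)
qed

lemma U_J: fixes x :: real assumes x: "x > 0"
  shows "(LBINT u:{0<..}. exp (- u) / (u + x)) = - exp x * (LBINT t=ereal 0..ereal x. phi t) - (ln x + euler_mascheroni)"
proof -
  have "(LBINT v:{x<..}. exp (- v) / v) = - (LBINT t=ereal 0..ereal x. phi t) - (ln x + euler_mascheroni) * exp (- x)"
    using E1_FTC[OF x] split_J[OF x] by simp
  hence "exp x * (LBINT v:{x<..}. exp (- v) / v) = exp x * (- (LBINT t=ereal 0..ereal x. phi t) - (ln x + euler_mascheroni) * exp (- x))"
    by simp
  also have "\<dots> = - exp x * (LBINT t=ereal 0..ereal x. phi t) - (ln x + euler_mascheroni) * (exp x * exp (- x))"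
    by (simp add: algebra_simps)
  also have "exp x * exp (- x) = 1" by (simp add: exp_add[symmetric])
  finally show ?thesis unfolding U_E1[OF x] by simp
qed

lemma formula2: fixes W :: real assumes W: "W > 0"
  shows "E_log_IG W = exp (2 * W) * (LBINT t=0..2 * W. (ln t + euler_mascheroni) * exp (- t)) + (euler_mascheroni + ln 2)"
proof -
  have e: "(LBINT t=0..2 * W. (ln t + euler_mascheroni) * exp (- t)) = (LBINT t=ereal 0..ereal (2 * W). phi t)"
    by (simp add: zero_ereal_def phi_def[abs_def])
  have l: "ln (2 * W) = ln 2 + ln W" using W by (simp add: ln_mult)
  have W2: "2 * W > 0" using W by simp
  show ?thesis unfolding e formula1[OF W] U_J[OF W2] using W l by simp
qed

lemma J_set: fixes x :: real assumes x: "x > 0"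
  shows "(LBINT t=ereal 0..ereal x. phi t) = (LBINT t:{0<..<x}. phi t)"
  using x by (simp add: interval_lebesgue_integral_le_eq)

lemma phi_int_x: fixes x :: real assumes x: "x > 0" shows "set_integrable lborel {0<..<x} phi"
  by (rule set_integrable_subset[OF phi_int(1)]) auto

lemma J_nonpos: fixes x :: real assumes x: "x > 0"
  shows "(LBINT t=ereal 0..ereal x. phi t) \<le> 0"
proof (cases "ln x + euler_mascheroni \<le> 0")
  case True
  have "0 \<le> (LBINT t:{0<..<x}. - phi t)"
    unfolding set_lebesgue_integral_def
  proof (rule integral_nonneg_AE, rule AE_I2)
    fix t :: real
    show "0 \<le> indicator {0<..<x} t *\<^sub>R - phi t"
    proof (cases "t \<in> {0<..<x}")
      case True
      hence "ln t < ln x" by simp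
      hence "ln t + euler_mascheroni \<le> 0" using \<open>ln x + euler_mascheroni \<le> 0\<close> by simp
      thus ?thesis using True unfolding phi_def by (simp add: mult_nonpos_nonneg)
    qed simp
  qed
  also have "(LBINT t:{0<..<x}. - phi t) = - (LBINT t:{0<..<x}. phi t)"
    unfolding set_lebesgue_integral_def by simp
  finally show ?thesis using J_set[OF x] by simp
next
  case False
  have "0 \<le> (LBINT t:{x<..}. phi t)"
    unfolding set_lebesgue_integral_def
  proof (rule integral_nonneg_AE, rule AE_I2)
    fix t :: real
    show "0 \<le> indicator {x<..} t *\<^sub>R phi t"
    proof (cases "t \<in> {x<..}")
      case True
      hence "ln t > ln x" using x by simp
      hence "ln t + euler_mascheroni \<ge> 0" using False by simp
      thus ?thesis using True unfolding phi_def by simp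
    qed simp
  qed
  thus ?thesis using split_J[OF x] by simp
qed

lemma J_lower: fixes x :: real assumes x: "x > 0" and xs: "ln x + euler_mascheroni \<le> 0"
  shows "x * ln x - x + euler_mascheroni * x \<le> (LBINT t=ereal 0..ereal x. phi t)"
proof -
  define F :: "real \<Rightarrow> real" where "F t = - (t * ln t - t + euler_mascheroni * t)" for t
  define f :: "real \<Rightarrow> real" where "f t = - (ln t + euler_mascheroni)" for t
  have lA: "((F \<circ> real_of_ereal) \<longlongrightarrow> 0) (at_right (ereal 0))"
    unfolding ereal_tendsto_simps1 F_def by real_asymp
  have lB: "((F \<circ> real_of_ereal) \<longlongrightarrow> F x) (at_left (ereal x))"
  proof -
    have "isCont F x" unfolding F_def using x by (intro continuous_intros) auto
    hence "(F \<longlongrightarrow> F x) (at x)" by (simp add: isCont_def)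
    hence "(F \<longlongrightarrow> F x) (at_left x)" by (rule tendsto_mono[OF at_le, rotated]) simp
    thus ?thesis unfolding ereal_tendsto_simps1 .
  qed
  note R = interval_integral_FTC_nonneg[of "ereal 0" "ereal x" F f, OF _ _ _ _ lA lB]
  have hyps: "ereal 0 < ereal x"
    "\<And>t. ereal 0 < ereal t \<Longrightarrow> ereal t < ereal x \<Longrightarrow> (F has_real_derivative f t) (at t)"
    "\<And>t. ereal 0 < ereal t \<Longrightarrow> ereal t < ereal x \<Longrightarrow> isCont f t"
    "AE t in lborel. ereal 0 < ereal t \<longrightarrow> ereal t < ereal x \<longrightarrow> 0 \<le> f t"
  proof -
    show "ereal 0 < ereal x" using x by simp
    fix t assume t: "ereal 0 < ereal t" "ereal t < ereal x"
    hence tp: "t > 0" by simp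
    show "(F has_real_derivative f t) (at t)" unfolding F_def f_def using tp
      by (auto intro!: derivative_eq_intros simp: field_simps)
    show "isCont f t" unfolding f_def using tp by (intro continuous_intros) auto
  next
    show "AE t in lborel. ereal 0 < ereal t \<longrightarrow> ereal t < ereal x \<longrightarrow> 0 \<le> f t"
    proof (rule AE_I2, intro impI)
      fix t assume t: "ereal 0 < ereal t" "ereal t < ereal x"
      hence "ln t < ln x" by simp
      thus "0 \<le> f t" using xs unfolding f_def by simp
    qed
  qed
  have fi: "set_integrable lborel {0<..<x} f" using R(1)[OF hyps] by simp
  have fv: "(LBINT t:{0<..<x}. f t) = F x" using R(2)[OF hyps] x by (simp add: interval_lebesgue_integral_le_eq)
  have "(LBINT t:{0<..<x}. - f t) \<le> (LBINT t:{0<..<x}. phi t)"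
  proof (rule set_integral_mono)
    show "set_integrable lborel {0<..<x} (\<lambda>t. - f t)" using fi unfolding set_integrable_def by simp
    show "set_integrable lborel {0<..<x} phi" by (rule phi_int_x[OF x])
    fix t assume t: "t \<in> {0<..<x}"
    hence "ln t < ln x" by simp
    hence n: "ln t + euler_mascheroni \<le> 0" using xs by simp
    have "exp (- t) \<le> 1" using t by simp
    hence "(ln t + euler_mascheroni) * 1 \<le> (ln t + euler_mascheroni) * exp (- t)"
      using n by (intro mult_left_mono_neg) auto
    thus "- f t \<le> phi t" unfolding f_def phi_def by simp
  qed
  also have "(LBINT t:{0<..<x}. - f t) = - F x" using fv unfolding set_lebesgue_integral_def by simp
  finally show ?thesis using J_set[OF x] unfolding F_def by simp
qed

lemma U_upper: fixes x :: real assumes x: "x > 0"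
  shows "(LBINT u:{0<..}. exp (- u) / (u + x)) \<le> ln (1 + x) - ln x"
proof -
  define c where "c = 1 / (1 + x)"
  define g where "g u = 1 / (u + x) - c" for u :: real
  have i1: "integrable lborel (\<lambda>u. indicator {0<..} u * (exp (- u) / (u + x)))"
    using U_integrable[of "x / 2"] x unfolding set_integrable_def by simp
  have i3: "integrable lborel (\<lambda>u::real. indicator {0<..} u * exp (- u))"
    using exp_int(1) unfolding set_integrable_def by simp
  have gi01: "set_integrable lborel {0..1} g"
    unfolding g_def using x by (intro borel_integrable_atLeastAtMost' continuous_intros) auto
  have i2: "integrable lborel (\<lambda>u. indicator {0<..<1} u * g u)"
  proof -
    have "set_integrable lborel {0<..<1::real} g" by (rule set_integrable_subset[OF gi01]) auto
    thus ?thesis unfolding set_integrable_def by simp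
  qed
  have gint: "(LBINT u. indicator {0<..<1} u * g u) = ln (1 + x) - ln x - c"
  proof -
    have "(LBINT u=ereal 0..ereal 1. g u) = (ln (1 + x) - c * 1) - (ln (0 + x) - c * 0)"
    proof (rule interval_integral_FTC_finite)
      show "continuous_on {min 0 1..max 0 1} g" unfolding g_def using x by (intro continuous_intros) auto
      fix u :: real assume u: "min 0 1 \<le> u" "u \<le> max 0 1"
      have "((\<lambda>u. ln (u + x) - c * u) has_real_derivative g u) (at u)"
        unfolding g_def using u x by (auto intro!: derivative_eq_intros simp: field_simps)
      thus "((\<lambda>u. ln (u + x) - c * u) has_vector_derivative g u) (at u within {min 0 1..max 0 1})"
        by (simp add: has_real_derivative_iff_has_vector_derivative has_vector_derivative_at_within)
    qed
    thus ?thesis by (simp add: interval_lebesgue_integral_le_eq set_lebesgue_integral_def)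
  qed
  have D: "indicator {0<..} u * (exp (- u) / (u + x)) - c * (indicator {0<..} u * exp (- u)) - indicator {0<..<1} u * g u \<le> 0" for u :: real
  proof (cases "u > 0")
    case False thus ?thesis by (simp add: indicator_def)
  next
    case True
    have eq: "indicator {0<..} u * (exp (- u) / (u + x)) - c * (indicator {0<..} u * exp (- u)) - indicator {0<..<1} u * g u
        = (exp (- u) - indicator {..<1} u) * (1 / (u + x) - c)"
    proof (cases "u < 1")
      case True
      thus ?thesis using \<open>u > 0\<close> unfolding g_def by (simp add: indicator_def algebra_simps diff_divide_distrib)
    next
      case False
      thus ?thesis using \<open>u > 0\<close> unfolding g_def by (simp add: indicator_def algebra_simps)
    qed
    show ?thesis unfolding eq
    proof (cases "u < 1")
      case True
      have "exp (- u) \<le> 1" using \<open>u > 0\<close> by simp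
      moreover have "c \<le> 1 / (u + x)" unfolding c_def using True \<open>u > 0\<close> x by (intro divide_left_mono) auto
      ultimately show "(exp (- u) - indicator {..<1} u) * (1 / (u + x) - c) \<le> 0"
        using True by (simp add: mult_nonpos_nonneg)
    next
      case False
      have "1 / (u + x) \<le> c" unfolding c_def using False x by (intro divide_left_mono) auto
      thus "(exp (- u) - indicator {..<1} u) * (1 / (u + x) - c) \<le> 0"
        using False by (simp add: mult_nonneg_nonpos)
    qed
  qed
  have "(LBINT u. indicator {0<..} u * (exp (- u) / (u + x)) - c * (indicator {0<..} u * exp (- u)) - indicator {0<..<1} u * g u) \<le> 0"
  proof -
    have "0 \<le> (LBINT u. - (indicator {0<..} u * (exp (- u) / (u + x)) - c * (indicator {0<..} u * exp (- u)) - indicator {0<..<1} u * g u))"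
      by (rule integral_nonneg_AE, rule AE_I2) (use D in simp)
    thus ?thesis by (simp only: integral_minus)
  qed
  moreover have "(LBINT u. indicator {0<..} u * (exp (- u) / (u + x)) - c * (indicator {0<..} u * exp (- u)) - indicator {0<..<1} u * g u)
      = (LBINT u:{0<..}. exp (- u) / (u + x)) - c * 1 - (ln (1 + x) - ln x - c)"
  proof -
    have "(LBINT u. indicator {0<..} u * (exp (- u) / (u + x)) - c * (indicator {0<..} u * exp (- u)) - indicator {0<..<1} u * g u)
        = (LBINT u. indicator {0<..} u * (exp (- u) / (u + x))) - c * (LBINT u. indicator {0<..} u * exp (- u)) - (LBINT u. indicator {0<..<1} u * g u)"
      using i1 i2 i3 by simp
    also have "(LBINT u::real. indicator {0<..} u * exp (- u)) = 1" using exp_int(2) unfolding set_lebesgue_integral_def by simp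
    finally show ?thesis unfolding gint by (simp add: set_lebesgue_integral_def)
  qed
  ultimately show ?thesis by simp
qed

lemma J_conv: fixes W :: real
  shows "(LBINT t=0..2 * W. (ln t + euler_mascheroni) * exp (- t)) = (LBINT t=ereal 0..ereal (2 * W). phi t)"
  by (simp add: zero_ereal_def phi_def[abs_def])

lemma exp_le_2: fixes x :: real assumes "x \<le> exp (- euler_mascheroni)" shows "exp x \<le> 2"
proof -
  have g: "euler_mascheroni > (19/33::real)" by (rule euler_mascheroni_gt_19_over_33)
  have "1 + euler_mascheroni \<le> exp (euler_mascheroni::real)" by (rule exp_ge_add_one_self)
  hence "exp (euler_mascheroni::real) \<ge> 3/2" using g by linarith
  hence "exp (- euler_mascheroni::real) \<le> 2/3" by (simp add: exp_minus field_simps)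
  hence "x \<le> ln 2" using assms ln2_ge_two_thirds by linarith
  hence "exp x \<le> exp (ln 2)" by (simp only: exp_le_cancel_iff)
  thus ?thesis by simp
qed

theorem lemmaA3:
  fixes c2 :: real
  defines "c2 \<equiv> euler_mascheroni + ln 2"
  shows "(\<forall>W>0. set_integrable lborel {0<..} (\<lambda>x. ln x * IG_density (1 / W) 1 x)
            \<and> E_log_IG W = - ln W - (LBINT u:{0<..}. exp (- u) / (u + 2 * W))
            \<and> E_log_IG W = exp (2 * W) * (LBINT t=0..2 * W. (ln t + euler_mascheroni) * exp (- t)) + c2)
       \<and> (\<forall>W>0. - ln (W + 1 / 2) \<le> E_log_IG W \<and> E_log_IG W \<le> min (- ln W) c2)
       \<and> (\<forall>W. 0 < W \<and> W \<le> exp (- euler_mascheroni) / 2 \<longrightarrow>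
            c2 + 4 * W * (ln W + c2 - 1) \<le> E_log_IG W \<and> E_log_IG W \<le> c2)
       \<and> (E_log_IG \<longlongrightarrow> c2) (at_right 0)"
proof -
  have A: "set_integrable lborel {0<..} (\<lambda>x. ln x * IG_density (1 / W) 1 x)
            \<and> E_log_IG W = - ln W - (LBINT u:{0<..}. exp (- u) / (u + 2 * W))
            \<and> E_log_IG W = exp (2 * W) * (LBINT t=0..2 * W. (ln t + euler_mascheroni) * exp (- t)) + c2"
    if W: "W > 0" for W :: real
    using subst_main(1)[OF W] formula1[OF W] formula2[OF W] unfolding c2_def by simp
  have upc2: "E_log_IG W \<le> c2" if W: "W > 0" for W :: real
  proof -
    have W2: "2 * W > 0" using W by simp
    have "exp (2 * W) * (LBINT t=ereal 0..ereal (2 * W). phi t) \<le> 0"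
      using J_nonpos[OF W2] by (simp add: mult_nonneg_nonpos)
    thus ?thesis using formula2[OF W] unfolding J_conv c2_def by simp
  qed
  have B: "- ln (W + 1 / 2) \<le> E_log_IG W \<and> E_log_IG W \<le> min (- ln W) c2" if W: "W > 0" for W :: real
  proof -
    have W2: "2 * W > 0" using W by simp
    have U0: "0 \<le> (LBINT u:{0<..}. exp (- u) / (u + 2 * W))"
      unfolding set_lebesgue_integral_def using W by (intro integral_nonneg_AE AE_I2) (simp add: indicator_def)
    have Uu: "(LBINT u:{0<..}. exp (- u) / (u + 2 * W)) \<le> ln (1 + 2 * W) - ln (2 * W)"
      by (rule U_upper[OF W2])
    have l1: "ln (1 + 2 * W) = ln 2 + ln (W + 1 / 2)"
    proof -
      have e: "1 + 2 * W = 2 * (W + 1 / 2)" by simp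
      have "ln (2 * (W + 1 / 2)) = ln 2 + ln (W + 1 / 2)" using W by (intro ln_mult_pos) auto
      thus ?thesis by (simp only: e)
    qed
    have l2: "ln (2 * W) = ln 2 + ln W" using W by (simp add: ln_mult)
    show ?thesis using formula1[OF W] U0 Uu l1 l2 upc2[OF W] by simp
  qed
  have C: "c2 + 4 * W * (ln W + c2 - 1) \<le> E_log_IG W \<and> E_log_IG W \<le> c2"
    if W: "0 < W" "W \<le> exp (- euler_mascheroni) / 2" for W :: real
  proof -
    define x where "x = 2 * W"
    have x: "x > 0" "x \<le> exp (- euler_mascheroni)" using W by (auto simp: x_def)
    have lx: "ln x + euler_mascheroni \<le> 0"
    proof -
      have "ln x \<le> ln (exp (- euler_mascheroni))" using x by (subst ln_le_cancel_iff) auto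
      thus ?thesis by simp
    qed
    define m where "m = x * ln x - x + euler_mascheroni * x"
    have m0: "m \<le> 0"
    proof -
      have "m = x * (ln x + euler_mascheroni - 1)" by (simp add: m_def algebra_simps)
      also have "\<dots> \<le> 0" using x lx by (intro mult_nonneg_nonpos) auto
      finally show ?thesis .
    qed
    have Jl: "m \<le> (LBINT t=ereal 0..ereal x. phi t)" unfolding m_def by (rule J_lower[OF x(1) lx])
    have e2: "exp x \<le> 2" by (rule exp_le_2[OF x(2)])
    have "2 * m \<le> exp x * m" using m0 e2 by (intro mult_right_mono_neg) auto
    also have "\<dots> \<le> exp x * (LBINT t=ereal 0..ereal x. phi t)" using Jl by (intro mult_left_mono) auto
    finally have "2 * m \<le> exp x * (LBINT t=ereal 0..ereal x. phi t)" .
    moreover have "2 * m = 4 * W * (ln W + c2 - 1)"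
      unfolding m_def x_def c2_def using W by (simp add: ln_mult algebra_simps)
    ultimately have "c2 + 4 * W * (ln W + c2 - 1) \<le> E_log_IG W"
      using formula2[OF W(1)] unfolding J_conv x_def c2_def by simp
    thus ?thesis using upc2[OF W(1)] by simp
  qed
  have D: "(E_log_IG \<longlongrightarrow> c2) (at_right 0)"
  proof (rule tendsto_sandwich)
    have ev: "eventually (\<lambda>W. 0 < W \<and> W \<le> exp (- euler_mascheroni) / 2) (at_right (0::real))"
      unfolding eventually_at_right_field by (rule exI[of _ "exp (- euler_mascheroni) / 2"]) auto
    show "eventually (\<lambda>W. c2 + 4 * W * (ln W + c2 - 1) \<le> E_log_IG W) (at_right 0)"
      using ev by eventually_elim (use C in blast)
    show "eventually (\<lambda>W. E_log_IG W \<le> c2) (at_right 0)"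
      using ev by eventually_elim (use C in blast)
    show "((\<lambda>W. c2) \<longlongrightarrow> c2) (at_right 0)" by simp
    have l1: "((\<lambda>W::real. W * ln W) \<longlongrightarrow> 0) (at_right 0)" by real_asymp
    have l2: "((\<lambda>W::real. W) \<longlongrightarrow> 0) (at_right 0)" by real_asymp
    have "((\<lambda>W. c2 + (4 * (W * ln W) + 4 * (c2 - 1) * W)) \<longlongrightarrow> c2 + (4 * 0 + 4 * (c2 - 1) * 0)) (at_right 0)"
      by (intro tendsto_intros l1 l2)
    thus "((\<lambda>W. c2 + 4 * W * (ln W + c2 - 1)) \<longlongrightarrow> c2) (at_right 0)" by (simp add: algebra_simps)
  qed
  show ?thesis using A B C D by blast
qed

end
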